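(* Let $R$ be a commutative ring, $S$ a subring of $R$, $I$ an ideal of $S$, $n\ge1$, $f\in(T_n(R))[x]$ and $1\le i\le j\le n$. [Right] The following are equivalent: (1) $[f(C)]_{ij}\in I$ for all $C\in T_n(S)$; (2) $[f_{ih}(C)]_{hj}\in I$ for all $C\in T_n(S)$ and all $h$ with $i\le h\le j$; (3) $\langle f_{ih},p_{hj}\rangle\in\mathrm{Int}(S^{\ast},I)$ for all $h$ with $i\le h\le j$. [Left] The following are equivalent: (1) $[f(C)_\ell]_{ij}\in I$ for all $C\in T_n(S)$; (2) $[f_{hj}(C)]_{ih}\in I$ for all $C\in T_n(S)$ and all $h$ with $i\le h\le j$; (3) $\langle f_{hj},p_{ih}\rangle\in\mathrm{Int}(S^{\ast},I)$ for all $h$ with $i\le h\le j$.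
   Context: $\mathbb{N}=\{1,2,3,\dots\}$. $T_n(A)$ denotes the ring of upper triangular $n\times n$ matrices over a ring $A$, and $[M]_{ij}$ the $(i,j)$-entry of a matrix $M$. For $f=\sum_k F_kx^k\in(T_n(R))[x]$ with $F_k\in T_n(R)$, right substitution is $f(C)=\sum_kF_kC^k$ and left substitution is $f(C)_\ell=\sum_kC^kF_k$. Writing $f_{ij}^{(k)}=[F_k]_{ij}$, set $f_{ij}=\sum_k f_{ij}^{(k)}x^k\in R[x]$. For $g\in R[x]$, $g(C)$ is the usual evaluation at a matrix. Let $R[X]=R[\{x_{ab}\mid a,b\in\mathbb{N}\}]$. Path polynomials: for $1\le i\le j$ and $k>0$, $p_{ij}^{(k)}=\sum_{i=i_1\le i_2\le\dots\le i_{k+1}=j} x_{i_1i_2}\cdots x_{i_ki_{k+1}}$; for $1\le i\le j$, $p_{ij}^{(0)}=\delta_{ij}$; for $i>j$, $p_{ij}^{(k)}=0$. For $g=\sum_kg_kx^k\in R[x]$, $\langle g,p_{ij}\rangle=\sum_k g_kp_{ij}^{(k)}\in R[X]$. $\mathrm{Int}(S^{\ast},I)$ denotes the set of polynomials in $R[X]$ that take values in $I$ whenever elements of $S$ are substituted (independently) for all the variables. *)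

theory Defs
  imports "HOL-Computational_Algebra.Polynomial" "HOL-Library.Poly_Mapping"
begin

text \<open>An n x n matrix over a ring is represented as a function nat => nat => 'a;
  only the entries with indices in 1..n are meaningful.\<close>

type_synonym 'a sqmat = "nat \<Rightarrow> nat \<Rightarrow> 'a"

definition tri_mats :: "nat \<Rightarrow> 'a::zero set \<Rightarrow> 'a sqmat set" where
  "tri_mats n A = {C. \<forall>i j. if 1 \<le> i \<and> i \<le> j \<and> j \<le> n then C i j \<in> A else C i j = 0}"

definition mat_mult :: "nat \<Rightarrow> 'a::comm_ring_1 sqmat \<Rightarrow> 'a sqmat \<Rightarrow> 'a sqmat" where
  "mat_mult n A B = (\<lambda>i j. \<Sum>h=1..n. A i h * B h j)"

definition mat_one :: "nat \<Rightarrow> 'a::comm_ring_1 sqmat" where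
  "mat_one n = (\<lambda>i j. if i = j \<and> 1 \<le> i \<and> i \<le> n then 1 else 0)"

definition mat_pow :: "nat \<Rightarrow> 'a::comm_ring_1 sqmat \<Rightarrow> nat \<Rightarrow> 'a sqmat" where
  "mat_pow n C k = (mat_mult n C ^^ k) (mat_one n)"

text \<open>f = sum_k F_k x^k in (T_n(R))[x] is represented by its coefficient list
  Fs = [F_0, F_1, ..., F_d].\<close>

definition right_subst :: "nat \<Rightarrow> 'a::comm_ring_1 sqmat list \<Rightarrow> 'a sqmat \<Rightarrow> 'a sqmat" where
  "right_subst n Fs C = (\<lambda>i j. \<Sum>k<length Fs. mat_mult n (Fs ! k) (mat_pow n C k) i j)"

definition left_subst :: "nat \<Rightarrow> 'a::comm_ring_1 sqmat list \<Rightarrow> 'a sqmat \<Rightarrow> 'a sqmat" where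
  "left_subst n Fs C = (\<lambda>i j. \<Sum>k<length Fs. mat_mult n (mat_pow n C k) (Fs ! k) i j)"

definition entry_poly :: "'a::zero sqmat list \<Rightarrow> nat \<Rightarrow> nat \<Rightarrow> 'a poly" where
  "entry_poly Fs i j = Poly (map (\<lambda>M. M i j) Fs)"

definition poly_mat_eval :: "nat \<Rightarrow> 'a::comm_ring_1 poly \<Rightarrow> 'a sqmat \<Rightarrow> 'a sqmat" where
  "poly_mat_eval n g C = (\<lambda>i j. \<Sum>k\<le>degree g. coeff g k * mat_pow n C k i j)"

type_synonym 'a mpolyX = "((nat \<times> nat) \<Rightarrow>\<^sub>0 nat) \<Rightarrow>\<^sub>0 'a"

definition mvar :: "nat \<Rightarrow> nat \<Rightarrow> 'a::comm_ring_1 mpolyX" where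
  "mvar a b = Poly_Mapping.single (Poly_Mapping.single (a, b) 1) 1"

definition mconst :: "'a::comm_ring_1 \<Rightarrow> 'a mpolyX" where
  "mconst c = Poly_Mapping.single 0 c"

definition meval :: "(nat \<times> nat \<Rightarrow> 'a::comm_ring_1) \<Rightarrow> 'a mpolyX \<Rightarrow> 'a" where
  "meval \<sigma> P = (\<Sum>m\<in>Poly_Mapping.keys P.
      Poly_Mapping.lookup P m * (\<Prod>v\<in>Poly_Mapping.keys m. \<sigma> v ^ Poly_Mapping.lookup m v))"

text \<open>Path polynomials p_ij^(k): sum over sequences i = i_1 <= ... <= i_(k+1) = j
  (represented as sorted lists of length k+1) of x_(i_1 i_2) ... x_(i_k i_(k+1)).
  For k = 0 this gives delta_ij, and for i > j it gives 0.\<close>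
definition path_seqs :: "nat \<Rightarrow> nat \<Rightarrow> nat \<Rightarrow> nat list set" where
  "path_seqs k i j = {s. length s = Suc k \<and> sorted s \<and> s ! 0 = i \<and> s ! k = j}"

definition path_poly :: "nat \<Rightarrow> nat \<Rightarrow> nat \<Rightarrow> 'a::comm_ring_1 mpolyX" where
  "path_poly k i j = (\<Sum>s\<in>path_seqs k i j. \<Prod>t<k. mvar (s ! t) (s ! Suc t))"

definition pairing :: "'a::comm_ring_1 poly \<Rightarrow> nat \<Rightarrow> nat \<Rightarrow> 'a mpolyX" where
  "pairing g i j = (\<Sum>k\<le>degree g. mconst (coeff g k) * path_poly k i j)"

definition Int_SI :: "'a::comm_ring_1 set \<Rightarrow> 'a set \<Rightarrow> 'a mpolyX set" where
  "Int_SI S I = {P. \<forall>\<sigma>. (\<forall>v. \<sigma> v \<in> S) \<longrightarrow> meval \<sigma> P \<in> I}"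

definition is_subring :: "'a::comm_ring_1 set \<Rightarrow> bool" where
  "is_subring S \<longleftrightarrow> 0 \<in> S \<and> 1 \<in> S \<and> (\<forall>a\<in>S. \<forall>b\<in>S. a + b \<in> S \<and> a - b \<in> S \<and> a * b \<in> S)"

definition is_ideal_of :: "'a::comm_ring_1 set \<Rightarrow> 'a set \<Rightarrow> bool" where
  "is_ideal_of I S \<longleftrightarrow> I \<subseteq> S \<and> 0 \<in> I \<and>
     (\<forall>a\<in>I. \<forall>b\<in>I. a + b \<in> I \<and> a - b \<in> I) \<and> (\<forall>s\<in>S. \<forall>a\<in>I. s * a \<in> I)"

end

theory Submission
  imports Defs
begin

definition mon :: "(nat \<times> nat \<Rightarrow> 'a::comm_ring_1) \<Rightarrow> (nat \<times> nat \<Rightarrow>\<^sub>0 nat) \<Rightarrow> 'a" where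
  "mon \<sigma> m = (\<Prod>v\<in>Poly_Mapping.keys m. \<sigma> v ^ Poly_Mapping.lookup m v)"

lemma mon_superset:
  assumes "finite A" "Poly_Mapping.keys m \<subseteq> A"
  shows "mon \<sigma> m = (\<Prod>v\<in>A. \<sigma> v ^ Poly_Mapping.lookup m v)"
  unfolding mon_def
  by (rule prod.mono_neutral_left) (use assms in \<open>auto simp: not_in_keys_iff_lookup_eq_zero\<close>)

lemma mon_add: "mon \<sigma> (m1 + m2) = mon \<sigma> m1 * mon \<sigma> m2"
proof -
  let ?A = "Poly_Mapping.keys m1 \<union> Poly_Mapping.keys m2"
  have "mon \<sigma> (m1 + m2) = (\<Prod>v\<in>?A. \<sigma> v ^ Poly_Mapping.lookup (m1+m2) v)"
    by (rule mon_superset) (auto dest: keys_add[THEN subsetD])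
  also have "\<dots> = (\<Prod>v\<in>?A. \<sigma> v ^ Poly_Mapping.lookup m1 v) * (\<Prod>v\<in>?A. \<sigma> v ^ Poly_Mapping.lookup m2 v)"
    by (simp add: lookup_add power_add prod.distrib)
  also have "\<dots> = mon \<sigma> m1 * mon \<sigma> m2"
    by (simp add: mon_superset[symmetric])
  finally show ?thesis .
qed

lemma mon_single: "mon \<sigma> (Poly_Mapping.single v 1) = \<sigma> v"
  by (simp add: mon_def)

lemma mon_zero: "mon \<sigma> 0 = 1"
  by (simp add: mon_def)

lemma mon_sum_single: "mon \<sigma> (\<Sum>t<(k::nat). Poly_Mapping.single (v t) 1) = (\<Prod>t<k. \<sigma> (v t))"
  by (induction k) (simp_all add: mon_zero mon_add mon_single mon_single[simplified])

lemma meval_superset: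
  assumes "finite A" "Poly_Mapping.keys P \<subseteq> A"
  shows "meval \<sigma> P = (\<Sum>m\<in>A. Poly_Mapping.lookup P m * mon \<sigma> m)"
  unfolding meval_def mon_def[symmetric]
  by (rule sum.mono_neutral_left) (use assms in \<open>auto simp: not_in_keys_iff_lookup_eq_zero\<close>)

lemma meval_add: "meval \<sigma> (P + Q) = meval \<sigma> P + meval \<sigma> Q"
proof -
  let ?A = "Poly_Mapping.keys P \<union> Poly_Mapping.keys Q"
  have "meval \<sigma> (P + Q) = (\<Sum>m\<in>?A. Poly_Mapping.lookup (P+Q) m * mon \<sigma> m)"
    by (rule meval_superset) (auto dest: keys_add[THEN subsetD])
  also have "\<dots> = (\<Sum>m\<in>?A. Poly_Mapping.lookup P m * mon \<sigma> m) + (\<Sum>m\<in>?A. Poly_Mapping.lookup Q m * mon \<sigma> m)"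
    by (simp add: lookup_add distrib_right sum.distrib)
  also have "\<dots> = meval \<sigma> P + meval \<sigma> Q"
    by (simp add: meval_superset[symmetric])
  finally show ?thesis .
qed

lemma meval_zero: "meval \<sigma> 0 = 0"
  by (simp add: meval_def)

lemma meval_sum: "meval \<sigma> (\<Sum>x\<in>A. f x) = (\<Sum>x\<in>A. meval \<sigma> (f x))"
  by (induction A rule: infinite_finite_induct) (simp_all add: meval_zero meval_add)

lemma meval_single: "meval \<sigma> (Poly_Mapping.single m c) = c * mon \<sigma> m"
  by (subst meval_superset[of "{m}"]) auto

lemma prod_mvar: "(\<Prod>t<(k::nat). mvar (a t) (b t)) = Poly_Mapping.single (\<Sum>t<k. Poly_Mapping.single (a t, b t) 1) (1::'a::comm_ring_1)"
  by (induction k) (simp_all add: mvar_def mult_single)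

lemma meval_path: "meval \<sigma> (mconst c * path_poly k h j) = c * (\<Sum>s\<in>path_seqs k h j. \<Prod>t<k. \<sigma> (s ! t, s ! Suc t))"
  by (simp add: path_poly_def prod_mvar mconst_def sum_distrib_left mult_single meval_sum
      meval_single mon_sum_single[simplified])

lemma meval_pairing: "meval \<sigma> (pairing g h j) = (\<Sum>k\<le>degree g. coeff g k * (\<Sum>s\<in>path_seqs k h j. \<Prod>t<k. \<sigma> (s ! t, s ! Suc t)))"
  by (simp add: pairing_def meval_sum meval_path)


lemma path_seqs_0: "path_seqs 0 h j = (if h = j then {[h]} else {})"
  unfolding path_seqs_def
  by (auto simp: length_Suc_conv)

lemma sorted_first_le: "sorted s \<Longrightarrow> y \<in> set s \<Longrightarrow> s ! 0 \<le> y"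
  by (metis in_set_conv_nth le0 sorted_nth_mono)

lemma path_seqs_nth:
  assumes "s \<in> path_seqs k h j" "t \<le> k"
  shows "h \<le> s ! t" "s ! t \<le> j"
  using assms unfolding path_seqs_def
  by (auto intro!: sorted_nth_mono[of s 0 t, simplified] sorted_nth_mono[of s t k, simplified])

lemma path_seqs_step:
  assumes "s \<in> path_seqs k h j" "t < k"
  shows "s ! t \<le> s ! Suc t"
  using assms unfolding path_seqs_def by (auto intro: sorted_nth_mono)

lemma path_seqs_empty: "j < h \<Longrightarrow> path_seqs k h j = {}"
  using path_seqs_nth[of _ k h j 0] by fastforce

lemma path_seqs_Suc: "path_seqs (Suc k) h j = (\<Union>a\<in>{h..j}. (Cons h) ` path_seqs k a j)"
proof (intro equalityI subsetI)
  fix s assume s: "s \<in> path_seqs (Suc k) h j"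
  then obtain x s' where e: "s = x # s'" and l: "length s' = Suc k"
    unfolding path_seqs_def by (auto simp: length_Suc_conv)
  have x: "x = h" using s e unfolding path_seqs_def by auto
  have ss: "sorted s'" "s' ! k = j" using s e unfolding path_seqs_def by auto
  have "s' \<in> path_seqs k (s' ! 0) j" using l ss unfolding path_seqs_def by auto
  moreover have "h \<le> s' ! 0" "s' ! 0 \<le> j"
    using path_seqs_nth[OF s, of 1] e by auto
  ultimately show "s \<in> (\<Union>a\<in>{h..j}. (Cons h) ` path_seqs k a j)" using e x by auto
next
  fix s assume "s \<in> (\<Union>a\<in>{h..j}. (Cons h) ` path_seqs k a j)"
  then obtain a s' where a: "h \<le> a" "a \<le> j" and s': "s' \<in> path_seqs k a j" and e: "s = h # s'"
    by auto
  have "\<forall>y\<in>set s'. h \<le> y" using s' a unfolding path_seqs_def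
    by (metis (mono_tags, lifting) dual_order.trans mem_Collect_eq sorted_first_le)
  then show "s \<in> path_seqs (Suc k) h j" using s' e unfolding path_seqs_def by auto
qed

lemma finite_path_seqs: "finite (path_seqs k h j)"
  by (induction k arbitrary: h) (auto simp: path_seqs_0 path_seqs_Suc)

lemma mat_pow_Suc: "mat_pow n C (Suc k) h j = (\<Sum>a=1..n. C h a * mat_pow n C k a j)"
  by (simp add: mat_pow_def mat_mult_def)

lemma mat_pow_path:
  assumes C: "\<forall>a b. b < a \<longrightarrow> C a b = 0" and "1 \<le> h" "j \<le> n"
  shows "mat_pow n C k h j = (\<Sum>s\<in>path_seqs k h j. \<Prod>t<k. C (s!t) (s!Suc t))"
  using assms(2)
proof (induction k arbitrary: h)
  case 0
  then show ?case using assms(3) by (auto simp: mat_pow_def mat_one_def path_seqs_0)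
next
  case (Suc k)
  let ?F = "\<lambda>k s. \<Prod>t<k. C (s!t) (s!Suc t)"
  have "mat_pow n C (Suc k) h j = (\<Sum>a=1..n. C h a * mat_pow n C k a j)"
    by (rule mat_pow_Suc)
  also have "\<dots> = (\<Sum>a=1..n. C h a * (\<Sum>s\<in>path_seqs k a j. ?F k s))"
    using Suc.IH by (intro sum.cong) auto
  also have "\<dots> = (\<Sum>a=h..j. C h a * (\<Sum>s\<in>path_seqs k a j. ?F k s))"
  proof (rule sum.mono_neutral_right)
    show "{h..j} \<subseteq> {1..n}" using Suc.prems assms(3) by auto
    show "\<forall>a\<in>{1..n} - {h..j}. C h a * (\<Sum>s\<in>path_seqs k a j. ?F k s) = 0"
      using C path_seqs_empty by force
  qed auto
  also have "\<dots> = (\<Sum>a=h..j. \<Sum>s\<in>path_seqs k a j. ?F (Suc k) (h # s))"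
  proof (intro sum.cong refl)
    fix a assume a: "a \<in> {h..j}"
    show "C h a * (\<Sum>s\<in>path_seqs k a j. ?F k s) = (\<Sum>s\<in>path_seqs k a j. ?F (Suc k) (h # s))"
      unfolding sum_distrib_left
    proof (intro sum.cong refl)
      fix s assume s: "s \<in> path_seqs k a j"
      then have "s ! 0 = a" unfolding path_seqs_def by auto
      then show "C h a * ?F k s = ?F (Suc k) (h # s)"
        by (subst prod.lessThan_Suc_shift) simp
    qed
  qed
  also have "\<dots> = (\<Sum>a=h..j. \<Sum>s\<in>(Cons h) ` path_seqs k a j. ?F (Suc k) s)"
    by (simp add: sum.reindex)
  also have "\<dots> = (\<Sum>s\<in>(\<Union>a\<in>{h..j}. (Cons h) ` path_seqs k a j). ?F (Suc k) s)"
  proof (rule sum.UNION_disjoint[symmetric])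
    show "\<forall>a\<in>{h..j}. \<forall>b\<in>{h..j}. a \<noteq> b \<longrightarrow> Cons h ` path_seqs k a j \<inter> Cons h ` path_seqs k b j = {}"
      unfolding path_seqs_def by auto
  qed (auto simp: finite_path_seqs)
  also have "\<dots> = (\<Sum>s\<in>path_seqs (Suc k) h j. ?F (Suc k) s)"
    by (simp add: path_seqs_Suc)
  finally show ?case .
qed


lemma tri_lower: "C \<in> tri_mats n A \<Longrightarrow> \<forall>a b. b < a \<longrightarrow> C a b = 0"
proof (intro allI impI)
  fix a b :: nat assume C: "C \<in> tri_mats n A" and ab: "b < a"
  have "if 1 \<le> a \<and> a \<le> b \<and> b \<le> n then C a b \<in> A else C a b = 0"
    using C unfolding tri_mats_def by blast
  then show "C a b = 0" using ab by simp
qed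

lemma tri_entry: "C \<in> tri_mats n A \<Longrightarrow> 0 \<in> A \<Longrightarrow> C a b \<in> A"
proof -
  assume C: "C \<in> tri_mats n A" and A: "0 \<in> A"
  have "if 1 \<le> a \<and> a \<le> b \<and> b \<le> n then C a b \<in> A else C a b = 0"
    using C unfolding tri_mats_def by blast
  then show "C a b \<in> A" using A by (simp split: if_splits)
qed

lemma pme_path:
  assumes "C \<in> tri_mats n A" "1 \<le> a" "b \<le> n"
  shows "poly_mat_eval n g C a b = (\<Sum>k\<le>degree g. coeff g k * (\<Sum>s\<in>path_seqs k a b. \<Prod>t<k. C (s!t) (s!Suc t)))"
  unfolding poly_mat_eval_def using mat_pow_path[OF tri_lower[OF assms(1)] assms(2,3)] by simp

lemma eval_pairing_equiv:
  assumes S0: "0 \<in> S" and ab: "1 \<le> a" "b \<le> n"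
  shows "(\<forall>C\<in>tri_mats n S. poly_mat_eval n g C a b \<in> I) \<longleftrightarrow> pairing g a b \<in> Int_SI S I"
proof
  assume H: "\<forall>C\<in>tri_mats n S. poly_mat_eval n g C a b \<in> I"
  show "pairing g a b \<in> Int_SI S I"
    unfolding Int_SI_def
  proof (intro CollectI allI impI)
    fix \<sigma> :: "nat \<times> nat \<Rightarrow> 'a" assume \<sigma>: "\<forall>v. \<sigma> v \<in> S"
    define C where "C = (\<lambda>x y. if 1 \<le> x \<and> x \<le> y \<and> y \<le> n then \<sigma> (x, y) else 0)"
    have C: "C \<in> tri_mats n S" using \<sigma> unfolding C_def tri_mats_def by auto
    have "meval \<sigma> (pairing g a b) = poly_mat_eval n g C a b"
      unfolding meval_pairing pme_path[OF C ab]
    proof (rule sum.cong[OF refl], rule arg_cong[where f="(*) _"], rule sum.cong[OF refl], rule prod.cong[OF refl])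
      fix k s t assume s: "s \<in> path_seqs k a b" and t: "t \<in> {..<k}"
      have "a \<le> s ! t" "s ! Suc t \<le> b" "s ! t \<le> s ! Suc t"
        using path_seqs_nth[OF s, of t] path_seqs_nth[OF s, of "Suc t"] path_seqs_step[OF s, of t] t
        by auto
      then show "\<sigma> (s ! t, s ! Suc t) = C (s ! t) (s ! Suc t)"
        using ab unfolding C_def by auto
    qed
    then show "meval \<sigma> (pairing g a b) \<in> I" using H C by simp
  qed
next
  assume H: "pairing g a b \<in> Int_SI S I"
  show "\<forall>C\<in>tri_mats n S. poly_mat_eval n g C a b \<in> I"
  proof
    fix C assume C: "C \<in> tri_mats n S"
    define \<sigma> where "\<sigma> = (\<lambda>(x, y). C x y)"
    have "\<forall>v. \<sigma> v \<in> S" using tri_entry[OF C S0] unfolding \<sigma>_def by auto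
    then have "meval \<sigma> (pairing g a b) \<in> I" using H unfolding Int_SI_def by auto
    moreover have "meval \<sigma> (pairing g a b) = poly_mat_eval n g C a b"
      unfolding meval_pairing pme_path[OF C ab] \<sigma>_def by simp
    ultimately show "poly_mat_eval n g C a b \<in> I" by simp
  qed
qed


lemma ideal_sum: "is_ideal_of I S \<Longrightarrow> (\<forall>x\<in>A. f x \<in> I) \<Longrightarrow> sum f A \<in> I"
  by (induction A rule: infinite_finite_induct) (auto simp: is_ideal_of_def)

lemma ideal_diff: "is_ideal_of I S \<Longrightarrow> a \<in> I \<Longrightarrow> b \<in> I \<Longrightarrow> a - b \<in> I"
  by (auto simp: is_ideal_of_def)

lemma pme_entry:
  "poly_mat_eval n (entry_poly Fs a b) C x y = (\<Sum>k<length Fs. (Fs ! k) a b * mat_pow n C k x y)"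
proof -
  let ?g = "entry_poly Fs a b"
  let ?N = "max (length Fs) (Suc (degree ?g))"
  have c: "coeff ?g k = (if k < length Fs then (Fs ! k) a b else 0)" for k
    by (simp add: entry_poly_def nth_default_def)
  have "poly_mat_eval n ?g C x y = (\<Sum>k<?N. coeff ?g k * mat_pow n C k x y)"
    unfolding poly_mat_eval_def
    by (rule sum.mono_neutral_left) (auto simp: coeff_eq_0)
  also have "\<dots> = (\<Sum>k<length Fs. coeff ?g k * mat_pow n C k x y)"
    by (rule sum.mono_neutral_right) (auto simp: c)
  also have "\<dots> = (\<Sum>k<length Fs. (Fs ! k) a b * mat_pow n C k x y)"
    by (rule sum.cong) (auto simp: c)
  finally show ?thesis .
qed

lemma mat_pow_zero_below:
  assumes "\<forall>a b. b < a \<longrightarrow> C a b = 0" "1 \<le> h" "j \<le> n" "j < h"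
  shows "mat_pow n C k h j = 0"
  using mat_pow_path[OF assms(1-3)] path_seqs_empty[OF assms(4)] by simp

context
  fixes S I :: "'a::comm_ring_1 set" and n :: nat and Fs :: "'a sqmat list"
  assumes Fs: "\<forall>k < length Fs. Fs ! k \<in> tri_mats n (UNIV :: 'a set)"
begin

lemma right_decomp:
  assumes C: "\<forall>a b. b < a \<longrightarrow> C a b = 0" and ij: "1 \<le> i" "j \<le> n"
  shows "right_subst n Fs C i j = (\<Sum>h=i..j. poly_mat_eval n (entry_poly Fs i h) C h j)"
proof -
  have "right_subst n Fs C i j = (\<Sum>k<length Fs. \<Sum>h=1..n. (Fs ! k) i h * mat_pow n C k h j)"
    by (simp add: right_subst_def mat_mult_def)
  also have "\<dots> = (\<Sum>h=1..n. \<Sum>k<length Fs. (Fs ! k) i h * mat_pow n C k h j)"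
    by (rule sum.swap)
  also have "\<dots> = (\<Sum>h=i..j. \<Sum>k<length Fs. (Fs ! k) i h * mat_pow n C k h j)"
  proof (rule sum.mono_neutral_right)
    show "\<forall>h\<in>{1..n} - {i..j}. (\<Sum>k<length Fs. (Fs ! k) i h * mat_pow n C k h j) = 0"
    proof
      fix h assume h: "h \<in> {1..n} - {i..j}"
      show "(\<Sum>k<length Fs. (Fs ! k) i h * mat_pow n C k h j) = 0"
      proof (cases "h < i")
        case True
        then show ?thesis using Fs tri_lower by (intro sum.neutral) fastforce
      next
        case False
        then show ?thesis using h mat_pow_zero_below[OF C, of h j n] ij by (intro sum.neutral) auto
      qed
    qed
  qed (use ij in auto)
  also have "\<dots> = (\<Sum>h=i..j. poly_mat_eval n (entry_poly Fs i h) C h j)"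
    by (simp add: pme_entry)
  finally show ?thesis .
qed

lemma left_decomp:
  assumes C: "\<forall>a b. b < a \<longrightarrow> C a b = 0" and ij: "1 \<le> i" "j \<le> n"
  shows "left_subst n Fs C i j = (\<Sum>h=i..j. poly_mat_eval n (entry_poly Fs h j) C i h)"
proof -
  have "left_subst n Fs C i j = (\<Sum>k<length Fs. \<Sum>h=1..n. mat_pow n C k i h * (Fs ! k) h j)"
    by (simp add: left_subst_def mat_mult_def)
  also have "\<dots> = (\<Sum>h=1..n. \<Sum>k<length Fs. (Fs ! k) h j * mat_pow n C k i h)"
    by (subst sum.swap) (simp add: mult.commute)
  also have "\<dots> = (\<Sum>h=i..j. \<Sum>k<length Fs. (Fs ! k) h j * mat_pow n C k i h)"
  proof (rule sum.mono_neutral_right)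
    show "\<forall>h\<in>{1..n} - {i..j}. (\<Sum>k<length Fs. (Fs ! k) h j * mat_pow n C k i h) = 0"
    proof
      fix h assume h: "h \<in> {1..n} - {i..j}"
      show "(\<Sum>k<length Fs. (Fs ! k) h j * mat_pow n C k i h) = 0"
      proof (cases "j < h")
        case True
        then show ?thesis using Fs tri_lower by (intro sum.neutral) fastforce
      next
        case False
        then show ?thesis using h mat_pow_zero_below[OF C, of i h n] ij by (intro sum.neutral) auto
      qed
    qed
  qed (use ij in auto)
  also have "\<dots> = (\<Sum>h=i..j. poly_mat_eval n (entry_poly Fs h j) C i h)"
    by (simp add: pme_entry)
  finally show ?thesis .
qed

end


lemma mat_pow_trunc_right:
  assumes C: "\<forall>a b. b < a \<longrightarrow> C a b = 0" and hj: "1 \<le> h" "j \<le> n" "h0 \<le> j"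
  shows "mat_pow n (\<lambda>a b. if h0 \<le> a then C a b else 0) k h j = (if h0 \<le> h then mat_pow n C k h j else 0)"
proof -
  let ?C' = "\<lambda>a b. if h0 \<le> a then C a b else (0::'a)"
  have C': "\<forall>a b. b < a \<longrightarrow> ?C' a b = 0" using C by auto
  show ?thesis
  proof (cases "h0 \<le> h")
    case True
    show ?thesis unfolding mat_pow_path[OF C' hj(1,2)] mat_pow_path[OF C hj(1,2)] using True
    proof (simp, intro sum.cong refl prod.cong)
      fix s t assume s: "s \<in> path_seqs k h j" and t: "t \<in> {..<k}"
      then have "h \<le> s ! t" using path_seqs_nth(1)[OF s, of t] by auto
      then show "?C' (s ! t) (s ! Suc t) = C (s ! t) (s ! Suc t)" using True by auto
    qed
  next
    case False
    have "(\<Sum>s\<in>path_seqs k h j. \<Prod>t<k. ?C' (s ! t) (s ! Suc t)) = 0"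
    proof (cases "k = 0")
      case True
      then show ?thesis using False hj by (simp add: path_seqs_0)
    next
      case nz: False
      then obtain k' where Suc: "k = Suc k'" using not0_implies_Suc by blast
      show ?thesis
      proof (intro sum.neutral ballI)
        fix s assume s: "s \<in> path_seqs k h j"
        then have "s ! 0 = h" unfolding path_seqs_def by auto
        then show "(\<Prod>t<k. ?C' (s ! t) (s ! Suc t)) = 0" unfolding Suc
          by (subst prod.lessThan_Suc_shift) (use False in simp)
      qed
    qed
    then show ?thesis using False by (simp add: mat_pow_path[OF C' hj(1,2)])
  qed
qed

lemma mat_pow_trunc_left:
  assumes C: "\<forall>a b. b < a \<longrightarrow> C a b = 0" and hj: "1 \<le> i" "h \<le> n" "i \<le> h0"
  shows "mat_pow n (\<lambda>a b. if b \<le> h0 then C a b else 0) k i h = (if h \<le> h0 then mat_pow n C k i h else 0)"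
proof -
  let ?C' = "\<lambda>a b. if b \<le> h0 then C a b else (0::'a)"
  have C': "\<forall>a b. b < a \<longrightarrow> ?C' a b = 0" using C by auto
  show ?thesis
  proof (cases "h \<le> h0")
    case True
    show ?thesis unfolding mat_pow_path[OF C' hj(1,2)] mat_pow_path[OF C hj(1,2)] using True
    proof (simp, intro sum.cong refl prod.cong)
      fix s t assume s: "s \<in> path_seqs k i h" and t: "t \<in> {..<k}"
      then have "s ! Suc t \<le> h" using path_seqs_nth(2)[OF s, of "Suc t"] by auto
      then show "?C' (s ! t) (s ! Suc t) = C (s ! t) (s ! Suc t)" using True by auto
    qed
  next
    case False
    have "(\<Sum>s\<in>path_seqs k i h. \<Prod>t<k. ?C' (s ! t) (s ! Suc t)) = 0"
    proof (cases "k = 0")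
      case True
      then show ?thesis using False hj by (simp add: path_seqs_0)
    next
      case nz: False
      then obtain k' where Suc: "k = Suc k'" using not0_implies_Suc by blast
      show ?thesis
      proof (intro sum.neutral ballI)
        fix s assume s: "s \<in> path_seqs k i h"
        then have "s ! Suc k' = h" unfolding path_seqs_def Suc by auto
        then show "(\<Prod>t<k. ?C' (s ! t) (s ! Suc t)) = 0" unfolding Suc
          using False by simp
      qed
    qed
    then show ?thesis using False by (simp add: mat_pow_path[OF C' hj(1,2)])
  qed
qed


lemma right_12:
  assumes Fs: "\<forall>k < length Fs. Fs ! k \<in> tri_mats n (UNIV :: 'a::comm_ring_1 set)"
    and S0: "0 \<in> S" and I: "is_ideal_of I S" and ij: "1 \<le> i" "i \<le> j" "j \<le> n"
    and H: "\<forall>C\<in>tri_mats n S. right_subst n Fs C i j \<in> I"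
    and C: "C \<in> tri_mats n S" and h0: "h0 \<in> {i..j}"
  shows "poly_mat_eval n (entry_poly Fs i h0) C h0 j \<in> I"
proof -
  define G where "G h = poly_mat_eval n (entry_poly Fs i h) C h j" for h
  have CL: "\<forall>a b. b < a \<longrightarrow> C a b = 0" by (rule tri_lower[OF C])
  have T: "(\<Sum>h=x..j. G h) \<in> I" if x: "x \<in> {i..j}" for x
  proof -
    let ?C' = "\<lambda>a b. if x \<le> a then C a b else 0"
    have C'S: "?C' \<in> tri_mats n S" using C S0 unfolding tri_mats_def by auto
    have C'L: "\<forall>a b. b < a \<longrightarrow> ?C' a b = 0" using CL by auto
    have "right_subst n Fs ?C' i j = (\<Sum>h=i..j. poly_mat_eval n (entry_poly Fs i h) ?C' h j)"
      by (rule right_decomp[OF Fs C'L]) (use ij in auto)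
    also have "\<dots> = (\<Sum>h=i..j. if x \<le> h then G h else 0)"
    proof (rule sum.cong[OF refl])
      fix h assume h: "h \<in> {i..j}"
      have "mat_pow n ?C' k h j = (if x \<le> h then mat_pow n C k h j else 0)" for k
        by (rule mat_pow_trunc_right[OF CL]) (use h x ij in auto)
      then show "poly_mat_eval n (entry_poly Fs i h) ?C' h j = (if x \<le> h then G h else 0)"
        unfolding G_def pme_entry by auto
    qed
    also have "\<dots> = (\<Sum>h=x..j. if x \<le> h then G h else 0)"
      by (rule sum.mono_neutral_right) (use x in auto)
    also have "\<dots> = (\<Sum>h=x..j. G h)" by simp
    finally show ?thesis using H C'S by metis
  qed
  show ?thesis
  proof (cases "h0 = j")
    case True
    then show ?thesis using T[of j] ij by (simp add: G_def)
  next
    case False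
    then have "h0 < j" using h0 by auto
    then have e: "(\<Sum>h=h0..j. G h) = G h0 + (\<Sum>h=Suc h0..j. G h)"
      by (simp add: sum.atLeast_Suc_atMost)
    have "G h0 = (\<Sum>h=h0..j. G h) - (\<Sum>h=Suc h0..j. G h)" using e by simp
    also have "\<dots> \<in> I" using T h0 \<open>h0 < j\<close> by (intro ideal_diff[OF I]) auto
    finally show ?thesis by (simp add: G_def)
  qed
qed

lemma left_12:
  assumes Fs: "\<forall>k < length Fs. Fs ! k \<in> tri_mats n (UNIV :: 'a::comm_ring_1 set)"
    and S0: "0 \<in> S" and I: "is_ideal_of I S" and ij: "1 \<le> i" "i \<le> j" "j \<le> n"
    and H: "\<forall>C\<in>tri_mats n S. left_subst n Fs C i j \<in> I"
    and C: "C \<in> tri_mats n S" and h0: "h0 \<in> {i..j}"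
  shows "poly_mat_eval n (entry_poly Fs h0 j) C i h0 \<in> I"
proof -
  define G where "G h = poly_mat_eval n (entry_poly Fs h j) C i h" for h
  have CL: "\<forall>a b. b < a \<longrightarrow> C a b = 0" by (rule tri_lower[OF C])
  have T: "(\<Sum>h=i..x. G h) \<in> I" if x: "x \<in> {i..j}" for x
  proof -
    let ?C' = "\<lambda>a b. if b \<le> x then C a b else 0"
    have C'S: "?C' \<in> tri_mats n S" using C S0 unfolding tri_mats_def by auto
    have C'L: "\<forall>a b. b < a \<longrightarrow> ?C' a b = 0" using CL by auto
    have "left_subst n Fs ?C' i j = (\<Sum>h=i..j. poly_mat_eval n (entry_poly Fs h j) ?C' i h)"
      by (rule left_decomp[OF Fs C'L]) (use ij in auto)
    also have "\<dots> = (\<Sum>h=i..j. if h \<le> x then G h else 0)"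
    proof (rule sum.cong[OF refl])
      fix h assume h: "h \<in> {i..j}"
      have "mat_pow n ?C' k i h = (if h \<le> x then mat_pow n C k i h else 0)" for k
        by (rule mat_pow_trunc_left[OF CL]) (use h x ij in auto)
      then show "poly_mat_eval n (entry_poly Fs h j) ?C' i h = (if h \<le> x then G h else 0)"
        unfolding G_def pme_entry by auto
    qed
    also have "\<dots> = (\<Sum>h=i..x. if h \<le> x then G h else 0)"
      by (rule sum.mono_neutral_right) (use x in auto)
    also have "\<dots> = (\<Sum>h=i..x. G h)" by simp
    finally show ?thesis using H C'S by metis
  qed
  show ?thesis
  proof (cases "h0 = i")
    case True
    then show ?thesis using T[of i] ij by (simp add: G_def)
  next
    case False
    then obtain p where p: "h0 = Suc p" "i \<le> p" using h0
      by (metis atLeastAtMost_iff le_antisym not_less_eq_eq old.nat.exhaust zero_less_Suc less_eq_Suc_le)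
    then have e: "(\<Sum>h=i..h0. G h) = (\<Sum>h=i..p. G h) + G h0"
      by simp
    have a: "(\<Sum>h=i..h0. G h) \<in> I" using T h0 by auto
    have b: "(\<Sum>h=i..p. G h) \<in> I" using T h0 p by auto
    have "(\<Sum>h=i..h0. G h) - (\<Sum>h=i..p. G h) \<in> I" by (rule ideal_diff[OF I a b])
    then have "G h0 \<in> I" by (metis e add_diff_cancel_left')
    then show ?thesis by (simp add: G_def)
  qed
qed

theorem lemma3p4:
  fixes S I :: "'a::comm_ring_1 set" and n i j :: nat and Fs :: "'a sqmat list"
  assumes "is_subring S" and "is_ideal_of I S" and "1 \<le> n"
    and "\<forall>k < length Fs. Fs ! k \<in> tri_mats n (UNIV :: 'a set)"
    and "1 \<le> i" and "i \<le> j" and "j \<le> n"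
  shows "((\<forall>C\<in>tri_mats n S. right_subst n Fs C i j \<in> I)
            \<longleftrightarrow> (\<forall>C\<in>tri_mats n S. \<forall>h\<in>{i..j}. poly_mat_eval n (entry_poly Fs i h) C h j \<in> I))
       \<and> ((\<forall>C\<in>tri_mats n S. \<forall>h\<in>{i..j}. poly_mat_eval n (entry_poly Fs i h) C h j \<in> I)
            \<longleftrightarrow> (\<forall>h\<in>{i..j}. pairing (entry_poly Fs i h) h j \<in> Int_SI S I))
       \<and> ((\<forall>C\<in>tri_mats n S. left_subst n Fs C i j \<in> I)
            \<longleftrightarrow> (\<forall>C\<in>tri_mats n S. \<forall>h\<in>{i..j}. poly_mat_eval n (entry_poly Fs h j) C i h \<in> I))
       \<and> ((\<forall>C\<in>tri_mats n S. \<forall>h\<in>{i..j}. poly_mat_eval n (entry_poly Fs h j) C i h \<in> I)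
            \<longleftrightarrow> (\<forall>h\<in>{i..j}. pairing (entry_poly Fs h j) i h \<in> Int_SI S I))"
proof (intro conjI)
  have S0: "0 \<in> S" using assms(1) by (simp add: is_subring_def)
  note Fs = assms(4) and I = assms(2) and ij = assms(5-7)
  show "(\<forall>C\<in>tri_mats n S. right_subst n Fs C i j \<in> I)
            \<longleftrightarrow> (\<forall>C\<in>tri_mats n S. \<forall>h\<in>{i..j}. poly_mat_eval n (entry_poly Fs i h) C h j \<in> I)"
  proof
    assume H: "\<forall>C\<in>tri_mats n S. right_subst n Fs C i j \<in> I"
    show "\<forall>C\<in>tri_mats n S. \<forall>h\<in>{i..j}. poly_mat_eval n (entry_poly Fs i h) C h j \<in> I"
      using right_12[OF Fs S0 I ij H] by blast
  next
    assume H: "\<forall>C\<in>tri_mats n S. \<forall>h\<in>{i..j}. poly_mat_eval n (entry_poly Fs i h) C h j \<in> I"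
    show "\<forall>C\<in>tri_mats n S. right_subst n Fs C i j \<in> I"
    proof
      fix C assume C: "C \<in> tri_mats n S"
      show "right_subst n Fs C i j \<in> I"
        unfolding right_decomp[OF Fs tri_lower[OF C] ij(1,3)]
        using H C by (intro ideal_sum[OF I]) auto
    qed
  qed
  show "(\<forall>C\<in>tri_mats n S. left_subst n Fs C i j \<in> I)
            \<longleftrightarrow> (\<forall>C\<in>tri_mats n S. \<forall>h\<in>{i..j}. poly_mat_eval n (entry_poly Fs h j) C i h \<in> I)"
  proof
    assume H: "\<forall>C\<in>tri_mats n S. left_subst n Fs C i j \<in> I"
    show "\<forall>C\<in>tri_mats n S. \<forall>h\<in>{i..j}. poly_mat_eval n (entry_poly Fs h j) C i h \<in> I"
      using left_12[OF Fs S0 I ij H] by blast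
  next
    assume H: "\<forall>C\<in>tri_mats n S. \<forall>h\<in>{i..j}. poly_mat_eval n (entry_poly Fs h j) C i h \<in> I"
    show "\<forall>C\<in>tri_mats n S. left_subst n Fs C i j \<in> I"
    proof
      fix C assume C: "C \<in> tri_mats n S"
      show "left_subst n Fs C i j \<in> I"
        unfolding left_decomp[OF Fs tri_lower[OF C] ij(1,3)]
        using H C by (intro ideal_sum[OF I]) auto
    qed
  qed
  have E1: "\<forall>h\<in>{i..j}. (\<forall>C\<in>tri_mats n S. poly_mat_eval n (entry_poly Fs i h) C h j \<in> I)
        \<longleftrightarrow> pairing (entry_poly Fs i h) h j \<in> Int_SI S I"
    using eval_pairing_equiv[OF S0] ij by auto
  then show "(\<forall>C\<in>tri_mats n S. \<forall>h\<in>{i..j}. poly_mat_eval n (entry_poly Fs i h) C h j \<in> I)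
            \<longleftrightarrow> (\<forall>h\<in>{i..j}. pairing (entry_poly Fs i h) h j \<in> Int_SI S I)"
    by blast
  have E2: "\<forall>h\<in>{i..j}. (\<forall>C\<in>tri_mats n S. poly_mat_eval n (entry_poly Fs h j) C i h \<in> I)
        \<longleftrightarrow> pairing (entry_poly Fs h j) i h \<in> Int_SI S I"
    using eval_pairing_equiv[OF S0] ij by auto
  then show "(\<forall>C\<in>tri_mats n S. \<forall>h\<in>{i..j}. poly_mat_eval n (entry_poly Fs h j) C i h \<in> I)
            \<longleftrightarrow> (\<forall>h\<in>{i..j}. pairing (entry_poly Fs h j) i h \<in> Int_SI S I)"
    by blast
qed

end
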